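(* $R_{2/2,3}=1+\sqrt3$. Every element of $\Pi_{2/2,3}$ can be written as \[ \psi_a(z)=\frac{\left(\frac13+\frac a2\right)z^2+(a+1)z+1}{\left(-\frac a2-\frac16\right)z^2+az+1},\qquad a\in\mathbb{R}. \] The value $1+\sqrt3$ is attained by $a=-1+\frac{1}{\sqrt3}$, and $R(\psi_a)<1+\sqrt3$ for all $a\ne -1+\frac1{\sqrt3}$.
   Context: A real rational function $\psi$ is always considered in lowest terms, as a smooth function on $\mathbb{R}$ minus its finitely many poles. It is absolutely monotonic at $x\in\mathbb{R}$ if $x$ is not a pole and $\psi^{(k)}(x)\ge 0$ for all integers $k\ge 0$. The radius of absolute monotonicity is $R(\psi)=\sup\big(\{r\in[0,\infty): \psi \text{ is absolutely monotonic at each point of } [-r,0]\}\cup\{0\}\big)\in[0,+\infty]$. For $m,n,p\in\mathbb{N}$, $\Pi_{m/n,p}$ denotes the set of rational functions $\psi=P/Q$ with $P,Q$ real polynomials, $\deg P\le m$, $Q\not\equiv 0$, $\deg Q\le n$, such that $\psi(z)-e^z=O(z^{p+1})$ as $z\to 0$. Finally, $R_{m/n,p}=\sup\{R(\psi):\psi\in\Pi_{m/n,p}\}$. *)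

theory Defs
  imports "HOL-Analysis.Analysis" "HOL-Computational_Algebra.Polynomial"
    "HOL-Computational_Algebra.Computational_Algebra" "HOL-Computational_Algebra.Field_as_Ring" "HOL-Library.Landau_Symbols"
    "HOL-Library.Extended_Real"
begin

text \<open>A real rational function is represented by a pair (P, Q) of real polynomials,
  Q nonzero; it is always taken in lowest terms (P and Q divided by their gcd).\<close>

definition rnum :: "real poly \<Rightarrow> real poly \<Rightarrow> real poly" where
  "rnum P Q = P div gcd P Q"

definition rden :: "real poly \<Rightarrow> real poly \<Rightarrow> real poly" where
  "rden P Q = Q div gcd P Q"

definition ratfun :: "real poly \<Rightarrow> real poly \<Rightarrow> real \<Rightarrow> real" where
  "ratfun P Q x = poly (rnum P Q) x / poly (rden P Q) x"

definition is_pole :: "real poly \<Rightarrow> real poly \<Rightarrow> real \<Rightarrow> bool" where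
  "is_pole P Q x \<longleftrightarrow> poly (rden P Q) x = 0"

definition abs_monotonic_at :: "real poly \<Rightarrow> real poly \<Rightarrow> real \<Rightarrow> bool" where
  "abs_monotonic_at P Q x \<longleftrightarrow>
     \<not> is_pole P Q x \<and> (\<forall>k::nat. (deriv ^^ k) (ratfun P Q) x \<ge> 0)"

definition radius_am :: "real poly \<Rightarrow> real poly \<Rightarrow> ereal" where
  "radius_am P Q = Sup ({ereal r | r. r \<ge> 0 \<and> (\<forall>x\<in>{-r..0}. abs_monotonic_at P Q x)} \<union> {0})"

definition Pi_set :: "nat \<Rightarrow> nat \<Rightarrow> nat \<Rightarrow> (real poly \<times> real poly) set" where
  "Pi_set m n p = {(P, Q). degree P \<le> m \<and> Q \<noteq> 0 \<and> degree Q \<le> n \<and>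
      (\<lambda>z. ratfun P Q z - exp z) \<in> O[at 0](\<lambda>z. z ^ (p + 1))}"

definition R_opt :: "nat \<Rightarrow> nat \<Rightarrow> nat \<Rightarrow> ereal" where
  "R_opt m n p = Sup ((\<lambda>(P, Q). radius_am P Q) ` Pi_set m n p)"

definition psi_num :: "real \<Rightarrow> real poly" where
  "psi_num a = [:1, a + 1, 1/3 + a/2:]"

definition psi_den :: "real \<Rightarrow> real poly" where
  "psi_den a = [:1, a, - a/2 - 1/6:]"

end

theory Submission
  imports Defs
begin



lemma rnum_rden_mult:
  fixes P Q :: "real poly"
  shows "P = rnum P Q * gcd P Q" "Q = rden P Q * gcd P Q"
  unfolding rnum_def rden_def by simp_all

lemma ratfun_eq:
  assumes "poly Q x \<noteq> 0"
  shows "ratfun P Q x = poly P x / poly Q x"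
proof -
  have g: "poly (gcd P Q) x \<noteq> 0"
    using assms rnum_rden_mult(2)[of Q P] by (metis mult_zero_right poly_mult)
  have "poly P x / poly Q x = (poly (rnum P Q) x * poly (gcd P Q) x) / (poly (rden P Q) x * poly (gcd P Q) x)"
    by (metis poly_mult rnum_rden_mult)
  also have "\<dots> = poly (rnum P Q) x / poly (rden P Q) x" using g by simp
  finally show ?thesis unfolding ratfun_def by simp
qed

lemma is_pole_iff:
  assumes "\<not> (poly P x = 0 \<and> poly Q x = 0)"
  shows "is_pole P Q x \<longleftrightarrow> poly Q x = 0"
proof -
  have eqs: "poly P x = poly (rnum P Q) x * poly (gcd P Q) x" "poly Q x = poly (rden P Q) x * poly (gcd P Q) x"
    by (metis poly_mult rnum_rden_mult)+
  show ?thesis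
  proof (cases "poly Q x = 0")
    case True
    then have "poly P x \<noteq> 0" using assms by auto
    then have "poly (gcd P Q) x \<noteq> 0" using eqs by auto
    then show ?thesis using True eqs unfolding is_pole_def by auto
  next
    case False
    then show ?thesis using eqs unfolding is_pole_def by auto
  qed
qed

lemma same_ratfun:
  fixes P1 Q1 P2 Q2 :: "real poly"
  assumes Q1: "Q1 \<noteq> 0" and Q2: "Q2 \<noteq> 0" and eq: "P1 * Q2 = P2 * Q1"
  shows "ratfun P1 Q1 = ratfun P2 Q2 \<and> is_pole P1 Q1 = is_pole P2 Q2"
proof -
  define r1 where "r1 = rnum P1 Q1"
  define s1 where "s1 = rden P1 Q1"
  define r2 where "r2 = rnum P2 Q2"
  define s2 where "s2 = rden P2 Q2"
  define g1 where "g1 = gcd P1 Q1"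
  define g2 where "g2 = gcd P2 Q2"
  have g1: "g1 \<noteq> 0" using Q1 unfolding g1_def by simp
  have g2: "g2 \<noteq> 0" using Q2 unfolding g2_def by simp
  have P1: "P1 = r1 * g1" and QQ1: "Q1 = s1 * g1" and P2: "P2 = r2 * g2" and QQ2: "Q2 = s2 * g2"
    unfolding r1_def s1_def r2_def s2_def g1_def g2_def by (simp_all add: rnum_rden_mult[symmetric])
  have s1: "s1 \<noteq> 0" using Q1 QQ1 by auto
  have s2: "s2 \<noteq> 0" using Q2 QQ2 by auto
  have cop1: "coprime r1 s1" unfolding r1_def s1_def r2_def s2_def g1_def g2_def rnum_def rden_def
    using Q1 by (intro div_gcd_coprime) auto
  have cop2: "coprime r2 s2" unfolding r1_def s1_def r2_def s2_def g1_def g2_def rnum_def rden_def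
    using Q2 by (intro div_gcd_coprime) auto
  have "(r1 * s2) * (g1 * g2) = (r2 * s1) * (g1 * g2)"
    using eq P1 P2 QQ1 QQ2 by (simp add: algebra_simps)
  then have e: "r1 * s2 = r2 * s1" using g1 g2 by simp
  have "s1 dvd r1 * s2" using e by simp
  then have d1: "s1 dvd s2" using cop1 by (metis coprime_commute coprime_dvd_mult_right_iff)
  have "s2 dvd r2 * s1" using e by (metis dvd_triv_right)
  then have d2: "s2 dvd s1" using cop2 by (metis coprime_commute coprime_dvd_mult_right_iff)
  obtain k where k: "s2 = s1 * k" using d1 by (auto elim: dvdE)
  obtain l where l: "s1 = s2 * l" using d2 by (auto elim: dvdE)
  have "s1 * 1 = s1 * (k * l)" using k l by (simp add: algebra_simps)
  then have "k * l = 1" using s1 by (metis mult_left_cancel)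
  then have "is_unit l" by (metis dvd_triv_right)
  then obtain c where lc: "l = monom c 0" and c: "c \<noteq> 0" by (auto elim: is_unit_polyE')
  have sl: "s1 = smult c s2" using l lc by (simp add: monom_0)
  have "r1 * s2 = smult c r2 * s2" using e sl by simp
  then have rl: "r1 = smult c r2" using s2 by (metis mult_right_cancel)
  have f: "ratfun P1 Q1 = ratfun P2 Q2"
    unfolding ratfun_def using c by (auto simp: r1_def[symmetric] s1_def[symmetric] r2_def[symmetric] s2_def[symmetric] rl sl)
  have p: "is_pole P1 Q1 = is_pole P2 Q2"
    unfolding is_pole_def using c by (auto simp: r1_def[symmetric] s1_def[symmetric] r2_def[symmetric] s2_def[symmetric] rl sl)
  show ?thesis using f p by simp
qed

lemma same_radius:
  fixes P1 Q1 P2 Q2 :: "real poly"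
  assumes "Q1 \<noteq> 0" "Q2 \<noteq> 0" "P1 * Q2 = P2 * Q1"
  shows "radius_am P1 Q1 = radius_am P2 Q2"
proof -
  have "abs_monotonic_at P1 Q1 = abs_monotonic_at P2 Q2"
    using same_ratfun[OF assms] unfolding abs_monotonic_at_def by (auto intro!: ext)
  then show ?thesis unfolding radius_am_def by simp
qed


lemma radius_le_pt:
  assumes "x0 \<le> 0" "\<not> abs_monotonic_at P Q x0"
  shows "radius_am P Q \<le> ereal (- x0)"
  unfolding radius_am_def
proof (rule Sup_least)
  fix y assume "y \<in> {ereal r |r. 0 \<le> r \<and> (\<forall>x\<in>{- r..0}. abs_monotonic_at P Q x)} \<union> {0}"
  then show "y \<le> ereal (- x0)"
  proof
    assume "y \<in> {ereal r |r. 0 \<le> r \<and> (\<forall>x\<in>{- r..0}. abs_monotonic_at P Q x)}"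
    then obtain r where r: "y = ereal r" "0 \<le> r" "\<forall>x\<in>{- r..0}. abs_monotonic_at P Q x" by auto
    have "r < - x0"
    proof (rule ccontr)
      assume "\<not> r < - x0"
      then have "x0 \<in> {-r..0}" using assms by auto
      then show False using r assms by auto
    qed
    then show ?thesis using r by simp
  next
    assume "y \<in> {0}" then show ?thesis using assms by (simp add: zero_ereal_def)
  qed
qed

lemma radius_lt_pt:
  assumes "- R < x0" "x0 \<le> 0" "\<not> abs_monotonic_at P Q x0"
  shows "radius_am P Q < ereal R"
proof -
  have "radius_am P Q \<le> ereal (- x0)" using radius_le_pt assms by blast
  also have "\<dots> < ereal R" using assms by simp
  finally show ?thesis .
qed

lemma not_am_neg:
  assumes "poly Q x \<noteq> 0" "poly P x / poly Q x < 0"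
  shows "\<not> abs_monotonic_at P Q x"
proof
  assume "abs_monotonic_at P Q x"
  then have "(deriv ^^ 0) (ratfun P Q) x \<ge> 0" unfolding abs_monotonic_at_def by blast
  then show False using assms ratfun_eq[OF assms(1)] by simp
qed

lemma cont_neg_right:
  fixes f :: "real \<Rightarrow> real"
  assumes "isCont f c" "f c < 0" "d > 0"
  shows "\<exists>x. c < x \<and> x < c + d \<and> f x < 0"
proof -
  from assms(1) have "(f \<longlongrightarrow> f c) (at c)" by (simp add: isCont_def)
  then obtain s where s: "s > 0" "\<forall>x. x \<noteq> c \<and> norm (x - c) < s \<longrightarrow> norm (f x - f c) < - f c"
    using assms(2) unfolding LIM_eq by (metis neg_0_less_iff_less)
  define x where "x = c + min s d / 2"
  have "c < x" "x < c + d" using s assms unfolding x_def by auto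
  moreover have "x \<noteq> c \<and> norm (x - c) < s" using s assms unfolding x_def by auto
  then have "norm (f x - f c) < - f c" using s(2) by blast
  ultimately show ?thesis by (intro exI[of _ x]) auto
qed

lemma poly_psi_num: "poly (psi_num a) x = 1 + (a+1)*x + (1/3 + a/2)*x^2"
  by (simp add: psi_num_def algebra_simps power2_eq_square)

lemma poly_psi_den: "poly (psi_den a) x = 1 + a*x + (- a/2 - 1/6)*x^2"
  by (simp add: psi_den_def algebra_simps power2_eq_square)

lemma psi_den_nz: "psi_den a \<noteq> 0"
  by (simp add: psi_den_def)

lemma psi_nocommon: "\<not> (poly (psi_num a) x = 0 \<and> poly (psi_den a) x = 0)"
proof
  assume h: "poly (psi_num a) x = 0 \<and> poly (psi_den a) x = 0"
  then have "poly (psi_num a) x - poly (psi_den a) x = 0" by simp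
  then have e: "x * (1 + (a + 1/2) * x) = 0" by (simp add: poly_psi_num poly_psi_den algebra_simps power2_eq_square)
  have "x \<noteq> 0" using h by (auto simp: poly_psi_den)
  then have "1 + (a + 1/2) * x = 0" using e by simp
  then have ax: "a * x = -1 - x/2" by (simp add: algebra_simps)
  have "poly (psi_den a) x = 1 + a*x - (a*x)*x/2 - x^2/6" by (simp add: poly_psi_den algebra_simps power2_eq_square)
  also have "\<dots> = x^2/12" unfolding ax by (simp add: field_simps power2_eq_square)
  finally show False using h \<open>x \<noteq> 0\<close> by simp
qed

lemma is_pole_psi: "is_pole (psi_num a) (psi_den a) x \<longleftrightarrow> poly (psi_den a) x = 0"
  using is_pole_iff psi_nocommon by blast

lemma sqrt3_facts: "sqrt 3 * sqrt 3 = (3::real)" "sqrt 3 > (173/100::real)" "sqrt 3 < (7/4::real)"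
proof -
  show "sqrt 3 * sqrt 3 = (3::real)" by simp
  have "(173/100::real) = sqrt ((173/100)^2)" by simp
  also have "\<dots> < sqrt 3" by (intro real_sqrt_less_mono) (simp add: power2_eq_square)
  finally show "sqrt 3 > (173/100::real)" .
  show "sqrt 3 < (7/4::real)" by (rule real_less_lsqrt) (auto simp: power2_eq_square)
qed

lemma N_at_R: "poly (psi_num a) (-(1 + sqrt 3)) = (4 - sqrt 3)/3 + a"
proof -
  define s where "s = sqrt (3::real)"
  have s: "s * s = 3" unfolding s_def by simp
  have "poly (psi_num a) (-(1 + s)) = 1 - (a+1)*(1 + s) + (1/3 + a/2)*(1 + 2 * s + s * s)"
    by (simp add: poly_psi_num power2_eq_square algebra_simps)
  also have "\<dots> = (4 - s)/3 + a" unfolding s by (simp add: algebra_simps diff_divide_distrib add_divide_distrib)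
  finally show ?thesis unfolding s_def .
qed

lemma D_at_R: "poly (psi_den a) (-(1 + sqrt 3)) = (1 - sqrt 3)/3 - (3 + 2 * sqrt 3) * a"
proof -
  define s where "s = sqrt (3::real)"
  have s: "s * s = 3" unfolding s_def by simp
  have "poly (psi_den a) (-(1 + s)) = 1 - a*(1 + s) + (-a/2 - 1/6)*(1 + 2 * s + s * s)"
    by (simp add: poly_psi_den power2_eq_square algebra_simps)
  also have "\<dots> = (1 - s)/3 - (3 + 2 * s) * a" unfolding s by (simp add: algebra_simps diff_divide_distrib add_divide_distrib)
  finally show ?thesis unfolding s_def .
qed



lemma regionA:
  assumes "a < -1"
  shows "radius_am (psi_num a) (psi_den a) < ereal (1 + sqrt 3)"
proof -
  define c where "c = - (1 + sqrt 3)"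
  define f where "f x = max (poly (psi_num a) x) (- poly (psi_den a) x)" for x
  have "isCont f c" unfolding f_def by (intro continuous_intros)
  moreover have "f c < 0"
  proof -
    have "(3 + 2 * sqrt 3) * a < (3 + 2 * sqrt 3) * (-1)"
      using assms sqrt3_facts by (intro mult_strict_left_mono) auto
    moreover have "(4 - sqrt 3)/3 + a < 0" using assms sqrt3_facts by (simp add: diff_divide_distrib)
    ultimately show ?thesis unfolding f_def c_def N_at_R D_at_R using assms sqrt3_facts by (simp add: diff_divide_distrib)
  qed
  ultimately obtain x where x: "c < x" "x < c + 1" "f x < 0" using cont_neg_right[where f=f and c=c and d=1] by auto
  have "poly (psi_den a) x > 0" "poly (psi_num a) x < 0" using x(3) unfolding f_def by auto
  then have "\<not> abs_monotonic_at (psi_num a) (psi_den a) x"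
    by (intro not_am_neg) (auto simp: divide_neg_pos)
  moreover have "x \<le> 0" using x(2) sqrt3_facts unfolding c_def by simp
  ultimately show ?thesis using radius_lt_pt[of "1 + sqrt 3" x] x(1) unfolding c_def by simp
qed

lemma regionD:
  assumes "poly (psi_den a) (-(1 + sqrt 3)) < 0"
  shows "radius_am (psi_num a) (psi_den a) < ereal (1 + sqrt 3)"
proof -
  note assms
  moreover have "poly (psi_den a) 0 > 0" by (simp add: poly_psi_den)
  ultimately obtain x where x: "-(1 + sqrt 3) < x" "x < 0" "poly (psi_den a) x = 0"
    using poly_IVT[of "-(1 + sqrt 3)" 0 "psi_den a"] sqrt3_facts by (auto simp: mult_neg_pos)
  then have "\<not> abs_monotonic_at (psi_num a) (psi_den a) x"
    unfolding abs_monotonic_at_def is_pole_psi by simp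
  then show ?thesis using radius_lt_pt[of "1 + sqrt 3" x] x by simp
qed

lemma open_poly_nz: "open {y. poly Q y \<noteq> (0::real)}"
  by (rule open_Collect_neq) (auto intro: continuous_intros)

lemma deriv_ratfun1:
  assumes "poly Q x \<noteq> 0"
  shows "deriv (ratfun P Q) x = (poly (pderiv P) x * poly Q x - poly P x * poly (pderiv Q) x) / (poly Q x)^2"
proof -
  have "((\<lambda>y. poly P y / poly Q y) has_real_derivative
      (poly (pderiv P) x * poly Q x - poly P x * poly (pderiv Q) x) / (poly Q x * poly Q x)) (at x)"
    using assms by (auto intro!: DERIV_divide poly_DERIV)
  then have "(ratfun P Q has_real_derivative
      (poly (pderiv P) x * poly Q x - poly P x * poly (pderiv Q) x) / (poly Q x * poly Q x)) (at x)"
    by (rule has_field_derivative_transform_within_open[where S="{y. poly Q y \<noteq> 0}"])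
       (auto simp: open_poly_nz assms ratfun_eq)
  then show ?thesis by (simp add: DERIV_imp_deriv power2_eq_square)
qed

lemma poly_pderiv_num: "poly (pderiv (psi_num a)) x = (a+1) + 2*(1/3+a/2)*x"
  by (simp add: psi_num_def pderiv_pCons algebra_simps)
lemma poly_pderiv_den: "poly (pderiv (psi_den a)) x = a + 2*(-a/2-1/6)*x"
  by (simp add: psi_den_def pderiv_pCons algebra_simps)

definition Wpoly :: "real \<Rightarrow> real \<Rightarrow> real" where
  "Wpoly a y = 1 + (2*a+1)*y + (a^2+a+1/6)*y^2"

lemma W_eq: "poly (pderiv (psi_num a)) y * poly (psi_den a) y - poly (psi_num a) y * poly (pderiv (psi_den a)) y = Wpoly a y"
  unfolding poly_pderiv_num poly_pderiv_den poly_psi_num poly_psi_den Wpoly_def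
  by (simp add: algebra_simps power2_eq_square add_divide_distrib diff_divide_distrib)

lemma W_at_R:
  assumes "-1 + 1 / sqrt 3 < a" "poly (psi_den a) (-(1 + sqrt 3)) \<ge> 0"
  shows "Wpoly a (-(1 + sqrt 3)) < 0"
proof -
  define s where "s = sqrt (3::real)"
  have h: "s * s = 3" unfolding s_def by simp
  have h2: "s * (s * x) = 3 * x" for x using h by (metis mult.assoc)
  have s1: "s > 173/100" "s < 7/4" unfolding s_def using sqrt3_facts by auto
  have inv3: "1 / s = s / 3" using h s1 by (simp add: divide_simps)
  have e: "6 * Wpoly a (-(1 + s)) = 6*((4+2 * s)*a^2 + 2*a) + 2*(2-2 * s)"
    unfolding Wpoly_def by (simp add: algebra_simps power2_eq_square h h2)
  have f: "9*((4+2 * s)*a^2 + 2*a) + 3*(2-2 * s) = (4+2 * s)*(3*a+3-s)*(3*a-2 * s+3)"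
    by (simp add: algebra_simps power2_eq_square h h2)
  have p1: "3*a+3-s > 0" using assms(1) unfolding s_def[symmetric] inv3 by simp
  have "(1 - sqrt 3)/3 - (3 + 2 * sqrt 3) * a \<ge> 0" using assms(2) unfolding D_at_R .
  then have "(3 + 2 * s) * a \<le> (1 - s)/3" unfolding s_def by simp
  also have "\<dots> < 0" using s1 by simp
  finally have "a < 0" using s1 by (simp add: mult_less_0_iff)
  then have p2: "3*a-2 * s+3 < 0" using s1 by simp
  have "(4+2 * s)*(3*a+3-s)*(3*a-2 * s+3) < 0"
    using p1 p2 s1 by (simp add: mult_pos_neg)
  then have "6 * Wpoly a (-(1 + s)) < 0" using e f by simp
  then show ?thesis unfolding s_def by simp
qed

lemma D_pos_C:
  assumes "-1 + 1 / sqrt 3 < a" "poly (psi_den a) (-(1 + sqrt 3)) \<ge> 0" "-(1 + sqrt 3) < x" "x \<le> 0"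
  shows "poly (psi_den a) x > 0"
proof (cases "a < -1/3")
  case True
  have "-1 + 1 / sqrt 3 < 0" using sqrt3_facts by (simp add: divide_simps)
  then have "a * x \<ge> 0" using True assms by (simp add: mult_nonpos_nonpos)
  moreover have "(- a/2 - 1/6) * x^2 \<ge> 0" using True by simp
  ultimately show ?thesis unfolding poly_psi_den by linarith
next
  case False
  define R where "R = 1 + sqrt 3"
  define q where "q = - a/2 - 1/6"
  have R: "R > 0" unfolding R_def using sqrt3_facts by simp
  have q: "q \<le> 0" using False unfolding q_def by simp
  have id: "R * poly (psi_den a) x = - x * poly (psi_den a) (-R) + (x + R) + q * R * (x * (x + R))"
    unfolding poly_psi_den q_def by (simp add: algebra_simps power2_eq_square)
  have "- x * poly (psi_den a) (-R) \<ge> 0" using assms unfolding R_def by (intro mult_nonneg_nonneg) auto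
  moreover have "x + R > 0" using assms unfolding R_def by simp
  moreover have "q * R * (x * (x + R)) \<ge> 0"
  proof -
    have "x * (x + R) \<le> 0" using assms \<open>x + R > 0\<close> by (simp add: mult_nonpos_nonneg)
    moreover have "q * R \<le> 0" using q R by (simp add: mult_nonpos_nonneg)
    ultimately show ?thesis by (metis mult_nonpos_nonpos)
  qed
  ultimately have "R * poly (psi_den a) x > 0" unfolding id by linarith
  then show ?thesis using R by (simp add: zero_less_mult_iff)
qed

lemma regionC:
  assumes "-1 + 1 / sqrt 3 < a" "poly (psi_den a) (-(1 + sqrt 3)) \<ge> 0"
  shows "radius_am (psi_num a) (psi_den a) < ereal (1 + sqrt 3)"
proof -
  define c where "c = - (1 + sqrt 3)"
  define f where "f x = Wpoly a x" for x
  have "isCont f c" unfolding f_def Wpoly_def by (intro continuous_intros)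
  moreover have "f c < 0" unfolding f_def c_def using W_at_R[OF assms] by simp
  ultimately obtain x where x: "c < x" "x < c + 1" "f x < 0" using cont_neg_right[where f=f and c=c and d=1] by auto
  have x0: "x \<le> 0" using x(2) sqrt3_facts unfolding c_def by simp
  have D: "poly (psi_den a) x > 0" using D_pos_C[OF assms, of x] x x0 unfolding c_def by simp
  have W: "Wpoly a x < 0" using x(3) unfolding f_def by auto
  have "(deriv ^^ 1) (ratfun (psi_num a) (psi_den a)) x = Wpoly a x / (poly (psi_den a) x)^2"
    using deriv_ratfun1[of "psi_den a" x "psi_num a"] D W_eq by simp
  also have "\<dots> < 0" using D W by (simp add: divide_neg_pos)
  finally have "\<not> abs_monotonic_at (psi_num a) (psi_den a) x"
    unfolding abs_monotonic_at_def by (metis not_le)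
  then show ?thesis using radius_lt_pt[of "1 + sqrt 3" x] x(1) x0 unfolding c_def by simp
qed




lemma deriv_transfer:
  assumes "open S" "y \<in> S" "\<forall>z\<in>S. (deriv ^^ k) F z = G z" "(G has_real_derivative G') (at y)"
  shows "((deriv ^^ k) F has_real_derivative G') (at y)" "(deriv ^^ (Suc k)) F y = G'"
proof -
  show h: "((deriv ^^ k) F has_real_derivative G') (at y)"
    by (rule has_field_derivative_transform_within_open[OF assms(4) assms(1) assms(2)]) (use assms(3) in auto)
  show "(deriv ^^ (Suc k)) F y = G'" using DERIV_imp_deriv[OF h] by simp
qed

lemma DERIV_quot_pow:
  fixes p Q :: "real poly"
  assumes "poly Q y \<noteq> 0"
  shows "((\<lambda>y. poly p y / poly Q y ^ n) has_real_derivative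
          (poly (pderiv p) y * poly Q y - of_nat n * poly p y * poly (pderiv Q) y) / poly Q y ^ Suc n) (at y)"
proof -
  have d: "((\<lambda>y. poly p y / poly Q y ^ n) has_real_derivative
      (poly (pderiv p) y * poly Q y ^ n - poly p y * (of_nat n * (poly (pderiv Q) y * poly Q y ^ (n - Suc 0)))) / (poly Q y ^ n * poly Q y ^ n)) (at y)"
    using assms by (intro DERIV_divide DERIV_power poly_DERIV) auto
  have "(poly (pderiv p) y * poly Q y ^ n - poly p y * (of_nat n * (poly (pderiv Q) y * poly Q y ^ (n - Suc 0)))) / (poly Q y ^ n * poly Q y ^ n)
      = (poly (pderiv p) y * poly Q y - of_nat n * poly p y * poly (pderiv Q) y) / poly Q y ^ Suc n"
  proof (cases n)
    case 0 then show ?thesis using assms by simp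
  next
    case (Suc m)
    define u where "u = poly Q y"
    have u: "u \<noteq> 0" using assms unfolding u_def by simp
    have "(poly (pderiv p) y * u ^ n - poly p y * (of_nat n * (poly (pderiv Q) y * u ^ (n - Suc 0)))) / (u ^ n * u ^ n)
        = (u ^ m * (poly (pderiv p) y * u - of_nat n * poly p y * poly (pderiv Q) y)) / (u ^ m * u ^ Suc n)"
      unfolding Suc by (simp add: algebra_simps)
    also have "\<dots> = (poly (pderiv p) y * u - of_nat n * poly p y * poly (pderiv Q) y) / u ^ Suc n"
      using u by simp
    finally show ?thesis unfolding u_def .
  qed
  then show ?thesis using d by simp
qed

lemma smooth_rep:
  fixes P Q :: "real poly"
  shows "\<exists>p. \<forall>y\<in>{y. poly Q y \<noteq> 0}. (deriv ^^ k) (ratfun P Q) y = poly p y / poly Q y ^ Suc k"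
proof (induction k)
  case 0
  show ?case by (intro exI[of _ P]) (auto simp: ratfun_eq)
next
  case (Suc k)
  then obtain p where p: "\<forall>y\<in>{y. poly Q y \<noteq> 0}. (deriv ^^ k) (ratfun P Q) y = poly p y / poly Q y ^ Suc k" by blast
  define p' where "p' = pderiv p * Q - smult (of_nat (Suc k)) (p * pderiv Q)"
  have "\<forall>y\<in>{y. poly Q y \<noteq> 0}. (deriv ^^ Suc k) (ratfun P Q) y = poly p' y / poly Q y ^ Suc (Suc k)"
  proof
    fix y assume y: "y \<in> {y. poly Q y \<noteq> 0}"
    have "(deriv ^^ Suc k) (ratfun P Q) y = (poly (pderiv p) y * poly Q y - of_nat (Suc k) * poly p y * poly (pderiv Q) y) / poly Q y ^ Suc (Suc k)"
      by (rule deriv_transfer(2)[OF open_poly_nz y p DERIV_quot_pow]) (use y in auto)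
    then show "(deriv ^^ Suc k) (ratfun P Q) y = poly p' y / poly Q y ^ Suc (Suc k)"
      unfolding p'_def by (simp add: algebra_simps)
  qed
  then show ?case by blast
qed

lemma smooth_deriv:
  fixes P Q :: "real poly"
  assumes "poly Q y \<noteq> 0"
  shows "((deriv ^^ k) (ratfun P Q) has_real_derivative (deriv ^^ Suc k) (ratfun P Q) y) (at y)"
proof -
  obtain p where p: "\<forall>y\<in>{y. poly Q y \<noteq> 0}. (deriv ^^ k) (ratfun P Q) y = poly p y / poly Q y ^ Suc k"
    using smooth_rep by blast
  have y: "y \<in> {y. poly Q y \<noteq> 0}" using assms by simp
  note D = DERIV_quot_pow[OF assms, of p "Suc k"]
  show ?thesis using deriv_transfer[OF open_poly_nz y p D] by simp
qed

lemma deriv_id: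
  assumes "open S" "y \<in> S" "\<forall>z\<in>S. A z = B z"
    "(A has_real_derivative A') (at y)" "(B has_real_derivative B') (at y)"
  shows "A' = B'"
proof -
  have "(B has_real_derivative A') (at y)"
    by (rule has_field_derivative_transform_within_open[OF assms(4) assms(1) assms(2)]) (use assms(3) in auto)
  then show ?thesis using assms(5) by (rule DERIV_unique)
qed


lemma DERIV_eq: "(f has_real_derivative D) F \<Longrightarrow> D = E \<Longrightarrow> (f has_real_derivative E) F"
  by simp

lemma leibniz_psi:
  fixes a :: real
  defines "f \<equiv> \<lambda>k. (deriv ^^ k) (ratfun (psi_num a) (psi_den a))"
  defines "q \<equiv> - a/2 - 1/6"
  shows "f 0 0 = 1" "f 1 0 = 1"
    "\<And>k. f (k+3) 0 + (real k + 3) * a * f (k+2) 0 + (real k + 3) * (real k + 2) * q * f (k+1) 0 = 0"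
proof -
  define S where "S = {y. poly (psi_den a) y \<noteq> 0}"
  define d where "d y = poly (psi_den a) y" for y
  define n2 where "n2 = 1/3 + a/2"
  have S: "open S" unfolding S_def by (rule open_poly_nz)
  have S0: "0 \<in> S" unfolding S_def by (simp add: poly_psi_den)
  have hf: "(f k has_real_derivative f (Suc k) y) (at y)" if "y \<in> S" for k y
    unfolding f_def using that unfolding S_def by (intro smooth_deriv) auto
  have hd: "(d has_real_derivative (a + 2*q*y)) (at y)" for y
    unfolding d_def q_def using poly_DERIV[of "psi_den a" y] poly_pderiv_den[of a y] by simp
  have hl: "((\<lambda>y. a + 2*q*y) has_real_derivative 2*q) (at y)" for y
    by (rule DERIV_eq, (rule derivative_intros)+) simp
  have d0: "d 0 = 1" unfolding d_def by (simp add: poly_psi_den)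
  have L0: "\<forall>y\<in>S. d y * f 0 y = poly (psi_num a) y"
    unfolding f_def d_def S_def by (auto simp: ratfun_eq)
  have L1: "\<forall>y\<in>S. (a + 2*q*y) * f 0 y + d y * f 1 y = (a + 1) + 2 * n2 * y"
  proof
    fix y assume y: "y \<in> S"
    have A: "((\<lambda>y. d y * f 0 y) has_real_derivative (a + 2*q*y) * f 0 y + d y * f 1 y) (at y)"
      by (rule DERIV_eq[OF DERIV_mult[OF hd hf[OF y]]]) (simp add: algebra_simps)
    have B: "(poly (psi_num a) has_real_derivative (a + 1) + 2 * n2 * y) (at y)"
      using poly_DERIV[of "psi_num a" y] poly_pderiv_num[of a y] unfolding n2_def by simp
    show "(a + 2*q*y) * f 0 y + d y * f 1 y = (a + 1) + 2 * n2 * y"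
      by (rule deriv_id[OF S y L0 A B])
  qed
  have L2: "\<forall>y\<in>S. d y * f 2 y + 2 * (a + 2*q*y) * f 1 y + 2 * q * f 0 y = 2 * n2"
  proof
    fix y assume y: "y \<in> S"
    have A: "((\<lambda>y. (a + 2*q*y) * f 0 y + d y * f 1 y) has_real_derivative
        d y * f 2 y + 2 * (a + 2*q*y) * f 1 y + 2 * q * f 0 y) (at y)"
      by (rule DERIV_eq[OF DERIV_add[OF DERIV_mult[OF hl hf[OF y]] DERIV_mult[OF hd hf[OF y]]]])
         (simp add: algebra_simps numeral_2_eq_2)
    have B: "((\<lambda>y. (a + 1) + 2 * n2 * y) has_real_derivative 2 * n2) (at y)"
      by (rule DERIV_eq, (rule derivative_intros)+) simp
    show "d y * f 2 y + 2 * (a + 2*q*y) * f 1 y + 2 * q * f 0 y = 2 * n2"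
      by (rule deriv_id[OF S y L1 A B])
  qed
  define E where "E k y = d y * f (k+2) y + (real k + 2) * (a + 2*q*y) * f (k+1) y + (real k + 2) * (real k + 1) * q * f k y" for k y
  have LE: "\<forall>y\<in>S. E k y = (if k = 0 then 2 * n2 else 0)" for k
  proof (induction k)
    case 0 then show ?case using L2 unfolding E_def by (simp add: algebra_simps numeral_2_eq_2)
  next
    case (Suc k)
    show ?case
    proof
      fix y assume y: "y \<in> S"
      have A: "(E k has_real_derivative E (Suc k) y) (at y)"
        unfolding E_def
        by (rule DERIV_eq[OF DERIV_add[OF DERIV_add[OF DERIV_mult[OF hd hf[OF y]]
              DERIV_mult[OF DERIV_cmult[OF hl] hf[OF y]]] DERIV_cmult[OF hf[OF y]]]])
           (simp add: algebra_simps)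
      have B: "((\<lambda>y. if k = 0 then 2 * n2 else 0) has_real_derivative 0) (at y)" by simp
      have "E (Suc k) y = 0" by (rule deriv_id[OF S y Suc.IH A B])
      then show "E (Suc k) y = (if Suc k = 0 then 2 * n2 else 0)" by simp
    qed
  qed
  have f00: "f 0 0 = 1" using L0 S0 d0 by (auto simp: poly_psi_num)
  show "f 0 0 = 1" by (rule f00)
  show "f 1 0 = 1" using L1 S0 d0 f00 by auto
  fix k
  have "E (Suc k) 0 = 0" using LE[of "Suc k"] S0 by auto
  then show "f (k+3) 0 + (real k + 3) * a * f (k+2) 0 + (real k + 3) * (real k + 2) * q * f (k+1) 0 = 0"
    unfolding E_def d0 by (simp add: algebra_simps numeral_3_eq_3 numeral_2_eq_2)
qed



fun sq :: "real \<Rightarrow> real \<Rightarrow> nat \<Rightarrow> real" where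
  "sq P Q 0 = 0"
| "sq P Q (Suc 0) = 1"
| "sq P Q (Suc (Suc n)) = P * sq P Q (Suc n) - Q * sq P Q n"

lemma sq_closed:
  assumes "P^2 < 4 * Q"
  defines "\<rho> \<equiv> sqrt Q" and "\<theta> \<equiv> arccos (P / (2 * sqrt Q))"
  shows "sq P Q m * (\<rho> * sin \<theta>) = \<rho> ^ m * sin (m * \<theta>)"
proof -
  have Q: "Q > 0" using assms(1) using zero_le_power2[of P] by linarith
  have r: "\<rho> > 0" unfolding \<rho>_def using Q by simp
  have rr: "\<rho> * \<rho> = Q" unfolding \<rho>_def using Q by simp
  have "\<bar>P\<bar> < 2 * \<rho>"
  proof -
    have "P^2 < (2 * \<rho>)^2" using assms(1) rr by (simp add: power2_eq_square)
    then show ?thesis using r power2_less_imp_less[of "\<bar>P\<bar>" "2 * \<rho>"] by simp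
  qed
  then have b: "-1 < P / (2 * \<rho>)" "P / (2 * \<rho>) < 1" using r by (auto simp: divide_simps abs_less_iff)
  have cth: "cos \<theta> = P / (2 * \<rho>)" unfolding \<theta>_def \<rho>_def[symmetric] using b by (simp add: cos_arccos)
  then have Pc: "P = 2 * \<rho> * cos \<theta>" using r by simp
  have trig: "sin (real (Suc (Suc n)) * \<theta>) = 2 * cos \<theta> * sin (real (Suc n) * \<theta>) - sin (real n * \<theta>)" for n
  proof -
    have g: "sin (x + \<theta>) + sin (x - \<theta>) = 2 * cos \<theta> * sin x" for x by (simp add: sin_add sin_diff)
    have "sin (real (Suc (Suc n)) * \<theta>) = sin (real (Suc n) * \<theta> + \<theta>)" by (simp add: algebra_simps)
    moreover have "sin (real n * \<theta>) = sin (real (Suc n) * \<theta> - \<theta>)" by (simp add: algebra_simps)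
    ultimately show ?thesis using g[of "real (Suc n) * \<theta>"] by simp
  qed
  have "sq P Q m * (\<rho> * sin \<theta>) = \<rho> ^ m * sin (m * \<theta>) \<and>
        sq P Q (Suc m) * (\<rho> * sin \<theta>) = \<rho> ^ Suc m * sin (Suc m * \<theta>)"
  proof (induction m)
    case 0 then show ?case by simp
  next
    case (Suc n)
    have "sq P Q (Suc (Suc n)) * (\<rho> * sin \<theta>) = P * (sq P Q (Suc n) * (\<rho> * sin \<theta>)) - Q * (sq P Q n * (\<rho> * sin \<theta>))"
      by (simp add: algebra_simps)
    also have "\<dots> = P * (\<rho> ^ Suc n * sin (Suc n * \<theta>)) - Q * (\<rho> ^ n * sin (n * \<theta>))"
      using Suc.IH by simp
    also have "\<dots> = \<rho> ^ Suc (Suc n) * (2 * cos \<theta> * sin (real (Suc n) * \<theta>) - sin (real n * \<theta>))"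
      unfolding Pc rr[symmetric] by (simp add: algebra_simps)
    also have "\<dots> = \<rho> ^ Suc (Suc n) * sin (real (Suc (Suc n)) * \<theta>)" using trig by simp
    finally show ?case using Suc.IH by simp
  qed
  then show ?thesis by simp
qed

lemma sq_nonpos_exists:
  assumes "P^2 < 4 * Q"
  shows "\<exists>j. sq P Q j \<le> 0 \<and> j \<ge> 1"
proof -
  define \<rho> where "\<rho> = sqrt Q"
  define \<theta> where "\<theta> = arccos (P / (2 * sqrt Q))"
  have Q: "Q > 0" using assms(1) using zero_le_power2[of P] by linarith
  have r: "\<rho> > 0" unfolding \<rho>_def using Q by simp
  have rr: "\<rho> * \<rho> = Q" unfolding \<rho>_def using Q by simp
  have "\<bar>P\<bar> < 2 * \<rho>"
  proof -
    have "P^2 < (2 * \<rho>)^2" using assms(1) rr by (simp add: power2_eq_square)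
    then show ?thesis using r power2_less_imp_less[of "\<bar>P\<bar>" "2 * \<rho>"] by simp
  qed
  then have b: "-1 < P / (2 * \<rho>)" "P / (2 * \<rho>) < 1" using r by (auto simp: divide_simps abs_less_iff)
  have th: "0 < \<theta>" "\<theta> < pi" unfolding \<theta>_def \<rho>_def[symmetric] using arccos_lt_bounded[OF b] by auto
  have st: "sin \<theta> > 0" using th by (simp add: sin_gt_zero)
  define j where "j = nat \<lceil>pi / \<theta>\<rceil>"
  have pj: "pi / \<theta> \<le> real j" unfolding j_def by linarith
  have jl: "real j < pi / \<theta> + 1"
  proof -
    have "pi / \<theta> > 0" using th by simp
    then have "real j = of_int \<lceil>pi / \<theta>\<rceil>" unfolding j_def by simp
    then show ?thesis using ceiling_correct[of "pi / \<theta>"] by linarith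
  qed
  have "pi \<le> real j * \<theta>" using pj th by (simp add: divide_simps)
  moreover have "real j * \<theta> < pi + \<theta>" using jl th by (simp add: divide_simps algebra_simps)
  ultimately have "sin (real j * \<theta>) \<le> 0" using th by (intro sin_le_zero) auto
  moreover have "sq P Q j * (\<rho> * sin \<theta>) = \<rho> ^ j * sin (j * \<theta>)"
    using sq_closed[OF assms] unfolding \<rho>_def \<theta>_def by simp
  moreover have "\<rho> ^ j > 0" using r by simp
  ultimately have "sq P Q j * (\<rho> * sin \<theta>) \<le> 0" by (simp add: mult_le_0_iff)
  then have "sq P Q j \<le> 0" using r st by (simp add: mult_le_0_iff)
  moreover have "j \<ge> 1"
  proof -
    have "pi / \<theta> > 1" using th by simp
    then show ?thesis using pj by linarith
  qed
  ultimately show ?thesis by blast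
qed

lemma rec_sq:
  assumes rec: "\<And>j. v (j+2) = P * v (j+1) - Q * v j"
  shows "v (m+1) = sq P Q (m+1) * v 1 - Q * sq P Q m * v 0"
proof -
  have "v (m+1) = sq P Q (m+1) * v 1 - Q * sq P Q m * v 0 \<and>
        v (m+2) = sq P Q (m+2) * v 1 - Q * sq P Q (m+1) * v 0"
  proof (induction m)
    case 0 then show ?case using rec[of 0] by simp
  next
    case (Suc n)
    have e1: "v (Suc n) = sq P Q (Suc n) * v 1 - Q * sq P Q n * v 0" using Suc.IH by simp
    have e2: "v (Suc (Suc n)) = sq P Q (Suc (Suc n)) * v 1 - Q * sq P Q (Suc n) * v 0" using Suc.IH by simp
    have "v (Suc (Suc (Suc n))) = P * v (Suc (Suc n)) - Q * v (Suc n)" using rec[of "Suc n"] by simp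
    also have "\<dots> = P * (sq P Q (Suc (Suc n)) * v 1 - Q * sq P Q (Suc n) * v 0) - Q * (sq P Q (Suc n) * v 1 - Q * sq P Q n * v 0)"
      by (simp only: e1 e2)
    also have "\<dots> = (P * sq P Q (Suc (Suc n)) - Q * sq P Q (Suc n)) * v 1 - Q * (P * sq P Q (Suc n) - Q * sq P Q n) * v 0"
      by (simp add: algebra_simps)
    also have "\<dots> = sq P Q (Suc (Suc (Suc n))) * v 1 - Q * sq P Q (Suc (Suc n)) * v 0" by simp
    finally show ?case using e2 by simp
  qed
  then show ?thesis by simp
qed

lemma oscillation:
  fixes v :: "nat \<Rightarrow> real"
  assumes rec: "\<And>j. v (j+2) = P * v (j+1) - Q * v j" and disc: "P^2 < 4 * Q" and v0: "v 0 > 0"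
  shows "\<exists>j. v j < 0"
proof (rule ccontr)
  assume "\<not> (\<exists>j. v j < 0)"
  then have nn: "\<And>j. v j \<ge> 0" by (meson not_le)
  have Q: "Q > 0" using disc using zero_le_power2[of P] by linarith
  obtain j where j: "sq P Q j \<le> 0" "j \<ge> 1" using sq_nonpos_exists[OF disc] by blast
  have "\<not> sq P Q (0 + 1) \<le> 0" by simp
  moreover have "sq P Q ((j - 1) + 1) \<le> 0" using j by simp
  ultimately have "\<exists>k<j - 1. (\<forall>i\<le>k. \<not> sq P Q (i + 1) \<le> 0) \<and> sq P Q (Suc k + 1) \<le> 0"
    by (intro ex_least_nat_less[of "\<lambda>i. sq P Q (i + 1) \<le> 0" "j - 1"]) auto
  then obtain k where k: "k < j - 1" "\<forall>i\<le>k. \<not> sq P Q (i + 1) \<le> 0" "sq P Q (k + 1 + 1) \<le> 0"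
    by auto
  have sk: "sq P Q (k+1) > 0" using k(2) by auto
  have "v (k+1+1) = sq P Q (k+1+1) * v 1 - Q * sq P Q (k+1) * v 0" by (rule rec_sq[OF rec])
  also have "\<dots> \<le> - (Q * sq P Q (k+1) * v 0)"
    using k(3) nn[of 1] by (simp add: mult_nonpos_nonneg)
  also have "\<dots> < 0" using Q sk v0 by simp
  finally show False using nn by (metis not_le)
qed


lemma regionB:
  assumes "-1 \<le> a" "a < -1 + 1 / sqrt 3"
  shows "radius_am (psi_num a) (psi_den a) < ereal (1 + sqrt 3)"
proof -
  define f where "f = (\<lambda>k. (deriv ^^ k) (ratfun (psi_num a) (psi_den a)))"
  define q where "q = - a/2 - 1/6"
  define v where "v j = f (j+1) 0 / fact (j+1)" for j
  have rec: "v (j+2) = (-a) * v (j+1) - q * v j" for j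
  proof -
    have e: "f (j+3) 0 + (real j + 3) * a * f (j+2) 0 + (real j + 3) * (real j + 2) * q * f (j+1) 0 = 0"
      using leibniz_psi(3)[where a=a and k=j] unfolding f_def q_def by simp
    define F where "F = (fact (j+1) :: real)"
    have Fp: "F > 0" unfolding F_def by simp
    have f3: "fact (j+3) = (real j + 3) * (real j + 2) * F"
      unfolding F_def by (simp add: numeral_3_eq_3 numeral_2_eq_2 algebra_simps)
    have f2: "fact (j+2) = (real j + 2) * F"
      unfolding F_def by (simp add: numeral_2_eq_2 algebra_simps)
    have e3: "f (j+3) 0 = (real j + 3) * (real j + 2) * F * v (j+2)"
      unfolding v_def using Fp f3 by (simp add: numeral_3_eq_3 numeral_2_eq_2 add.commute)
    have e2: "f (j+2) 0 = (real j + 2) * F * v (j+1)"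
      unfolding v_def using Fp f2 by (simp add: numeral_2_eq_2 add.commute)
    have e1: "f (j+1) 0 = F * v j"
      unfolding v_def F_def by simp
    have "((real j + 3) * (real j + 2) * F) * (v (j+2) + a * v (j+1) + q * v j) = 0"
      using e unfolding e3 e2 e1 by (simp add: algebra_simps)
    moreover have "(real j + 3) * (real j + 2) * F \<noteq> 0" using Fp by simp
    ultimately have "v (j+2) + a * v (j+1) + q * v j = 0" by simp
    then show ?thesis using e by simp
  qed
  have disc: "(-a)^2 < 4 * q"
  proof -
    have s: "sqrt 3 > 0" "sqrt 3 * sqrt 3 = (3::real)" by auto
    have "a + 1 < 1 / sqrt 3" using assms by simp
    then have "(a + 1)^2 < (1 / sqrt 3)^2" using assms by (intro power_strict_mono) auto
    also have "(1 / sqrt 3)^2 = (1/3::real)" by (simp add: power2_eq_square)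
    finally show ?thesis unfolding q_def by (simp add: power2_eq_square algebra_simps)
  qed
  have v0: "v 0 > 0" unfolding v_def f_def using leibniz_psi(2)[where a=a] by simp
  obtain j where j: "v j < 0" using oscillation[of v "-a" q, OF _ disc v0] rec by blast
  have fp: "0 < (fact (j+1)::real)" by (rule fact_gt_zero)
  have "f (j+1) 0 = v j * fact (j+1)" unfolding v_def using fp by simp
  then have "f (j+1) 0 < 0" using j fp by (simp add: mult_neg_pos)
  then have "\<not> abs_monotonic_at (psi_num a) (psi_den a) 0"
    unfolding abs_monotonic_at_def f_def by (metis not_le)
  then show ?thesis using radius_lt_pt[of "1 + sqrt 3" 0] sqrt3_facts by simp
qed




lemma DERIV_inv_pow:
  fixes r C z :: real
  assumes "z \<noteq> r"
  shows "((\<lambda>z. C / (r - z)^n) has_real_derivative (of_nat n * C / (r - z)^(Suc n))) (at z)"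
proof -
  have q: "poly [:r, -1:] y = r - y" for y by simp
  have "poly [:r, -1:] z \<noteq> 0" using assms by simp
  from DERIV_quot_pow[OF this, of "[:C:]" n] show ?thesis unfolding q by (simp add: pderiv_pCons)
qed

lemma star_facts:
  defines "s \<equiv> sqrt (3::real)"
  shows "poly (psi_den (-1 + 1 / sqrt 3)) z * (12 + 6 * s) = (3 + s - z)^2"
    "(12 + 6 * s) * poly (psi_num (-1 + 1 / sqrt 3)) z = (s + 1) * (3 + s - z)^2 - (12 * s + 18) * (3 + s - z) + (72 + 42 * s)"
    "poly (psi_num (-1 + 1 / sqrt 3)) z > 0"
proof -
  define a where "a = -1 + 1 / sqrt (3::real)"
  have h: "s * s = 3" unfolding s_def by simp
  have h2: "s * (s * x) = 3 * x" for x using h by (metis mult.assoc)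
  have s1: "s > 173/100" "s < 7/4" unfolding s_def using sqrt3_facts by auto
  have a3: "3 * a = s - 3" unfolding a_def s_def by (simp add: algebra_simps divide_simps)
  have D6: "6 * poly (psi_den a) z = 6 + 2*(s - 3)*z - (s - 3 + 1)*z^2"
    unfolding a3[symmetric] poly_psi_den by (simp add: algebra_simps power2_eq_square)
  have N6: "6 * poly (psi_num a) z = 6 + 2*(s - 3 + 3)*z + (s - 3 + 2)*z^2"
    unfolding a3[symmetric] poly_psi_num by (simp add: algebra_simps power2_eq_square)
  have "(6 * poly (psi_den a) z) * (12 + 6 * s) = 6 * (3 + s - z)^2"
    unfolding D6 by (simp add: algebra_simps power2_eq_square h h2)
  then show "poly (psi_den (-1 + 1 / sqrt 3)) z * (12 + 6 * s) = (3 + s - z)^2"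
    unfolding a_def by simp
  have "(12 + 6 * s) * (6 * poly (psi_num a) z) = 6 * ((s + 1) * (3 + s - z)^2 - (12 * s + 18) * (3 + s - z) + (72 + 42 * s))"
    unfolding N6 by (simp add: algebra_simps power2_eq_square h h2)
  then show "(12 + 6 * s) * poly (psi_num (-1 + 1 / sqrt 3)) z = (s + 1) * (3 + s - z)^2 - (12 * s + 18) * (3 + s - z) + (72 + 42 * s)"
    unfolding a_def by simp
  have e: "4 * (s - 1) * (6 * poly (psi_num a) z) = (2 * (s - 1) * z + 2 * s)^2 + (24 * s - 36)"
    unfolding N6 by (simp add: algebra_simps power2_eq_square h h2)
  have "24 * s - 36 > 0" using s1 by simp
  moreover have "(2 * (s - 1) * z + 2 * s)^2 \<ge> 0" by simp
  ultimately have "4 * (s - 1) * (6 * poly (psi_num a) z) > 0" unfolding e by linarith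
  moreover have "4 * (s - 1) > 0" using s1 by simp
  ultimately have "6 * poly (psi_num a) z > 0" by (rule zero_less_mult_pos)
  then have "poly (psi_num a) z > 0" by simp
  then show "poly (psi_num (-1 + 1 / sqrt 3)) z > 0" unfolding a_def .
qed


lemma quad_split:
  fixes u A B C :: real
  assumes "u \<noteq> 0"
  shows "(A * u^2 + B * u + C) / u^2 = A + B / u^1 + C / u^2"
proof -
  have "(A * u^2 + B * u + C) / u^2 = A * u^2 / u^2 + B * u / u^2 + C / u^2" by (simp add: add_divide_distrib)
  also have "A * u^2 / u^2 = A" using assms by simp
  also have "B * u / u^2 = B / u^1" using assms by (simp add: power2_eq_square)
  finally show ?thesis .
qed

lemma comb_div:
  fixes a b F u k d :: real
  shows "a * F * u / d + b * (k * F) / d = F * (a * u + b * k) / d"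
proof -
  have "a * F * u / d + b * (k * F) / d = (a * F * u + b * (k * F)) / d" by (rule add_divide_distrib[symmetric])
  also have "a * F * u + b * (k * F) = F * (a * u + b * k)" by (simp add: algebra_simps)
  finally show ?thesis .
qed

lemma star_radius:
  "radius_am (psi_num (-1 + 1 / sqrt 3)) (psi_den (-1 + 1 / sqrt 3)) = ereal (1 + sqrt 3)"
proof -
  define s where "s = sqrt (3::real)"
  define as where "as = -1 + 1 / sqrt (3::real)"
  define r where "r = 3 + s"
  define R where "R = 1 + s"
  define K where "K = 12 + 6 * s"
  define \<alpha> where "\<alpha> = - (12 * s + 18)"
  define \<beta> where "\<beta> = 72 + 42 * s"
  define c0 where "c0 = s + 1"
  define \<psi> where "\<psi> = ratfun (psi_num as) (psi_den as)"
  define H where "H k z = \<alpha> * fact k / (r - z)^(k+1) + \<beta> * fact (k+1) / (r - z)^(k+2)" for k z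
  have h: "s * s = 3" unfolding s_def by simp
  have h2: "s * (s * x) = 3 * x" for x using h by (metis mult.assoc)
  have s1: "s > 173/100" "s < 7/4" unfolding s_def using sqrt3_facts by auto
  have K: "K > 0" unfolding K_def using s1 by simp
  note sf = star_facts[folded as_def s_def, folded r_def K_def]
  have key: "\<alpha> * (r + R) + 2 * \<beta> = 0"
    unfolding \<alpha>_def \<beta>_def r_def R_def by (simp add: algebra_simps h h2)
  have \<alpha>neg: "\<alpha> < 0" unfolding \<alpha>_def using s1 by simp
  have \<beta>pos: "\<beta> > 0" unfolding \<beta>_def using s1 by simp
  define T where "T = {z::real. z < r}"
  have T: "open T"
  proof -
    have "T = {..<r}" unfolding T_def by auto
    then show ?thesis by simp
  qed
  have Dpos: "poly (psi_den as) z > 0" if "z < r" for z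
  proof -
    have "poly (psi_den as) z * K = (r - z)^2" using sf(1)[of z] unfolding r_def K_def s_def by simp
    moreover have "(r - z)^2 > 0" using that by simp
    ultimately have "poly (psi_den as) z * K > 0" by simp
    then show ?thesis using K by (rule zero_less_mult_pos2)
  qed
  have G0: "\<psi> z = c0 + \<alpha> / (r - z)^1 + \<beta> / (r - z)^2" if "z \<in> T" for z
  proof -
    have z: "z < r" using that unfolding T_def by simp
    have u: "r - z > 0" using z by simp
    have "\<psi> z = poly (psi_num as) z / poly (psi_den as) z"
      unfolding \<psi>_def using Dpos[OF z] by (simp add: ratfun_eq)
    also have "\<dots> = (K * poly (psi_num as) z) / (poly (psi_den as) z * K)" using K by simp
    also have "\<dots> = ((s + 1) * (r - z)^2 - (12 * s + 18) * (r - z) + (72 + 42 * s)) / (r - z)^2"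
      using sf(1)[of z] sf(2)[of z] unfolding r_def K_def s_def by simp
    also have "\<dots> = (c0 * (r - z)^2 + \<alpha> * (r - z) + \<beta>) / (r - z)^2"
      unfolding c0_def \<alpha>_def \<beta>_def by (simp add: algebra_simps)
    also have "\<dots> = c0 + \<alpha> / (r - z)^1 + \<beta> / (r - z)^2"
      using u by (intro quad_split) simp
    finally show ?thesis .
  qed
  have Hd: "(H k has_real_derivative H (Suc k) z) (at z)" if "z < r" for k z
  proof -
    have zr: "z \<noteq> r" using that by simp
    have "((\<lambda>z. \<alpha> * fact k / (r - z)^(k+1) + \<beta> * fact (k+1) / (r - z)^(k+2)) has_real_derivative
       (of_nat (k+1) * (\<alpha> * fact k) / (r - z)^(Suc (k+1)) + of_nat (k+2) * (\<beta> * fact (k+1)) / (r - z)^(Suc (k+2)))) (at z)"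
      by (intro DERIV_add DERIV_inv_pow zr)
    moreover have "of_nat (k+1) * (\<alpha> * fact k) / (r - z)^(Suc (k+1)) + of_nat (k+2) * (\<beta> * fact (k+1)) / (r - z)^(Suc (k+2))
        = H (Suc k) z"
      unfolding H_def by (simp add: algebra_simps)
    ultimately show ?thesis unfolding H_def[abs_def] by simp
  qed
  have HD: "\<forall>z\<in>T. (deriv ^^ Suc k) \<psi> z = H (Suc k) z" for k
  proof (induction k)
    case 0
    show ?case
    proof
      fix z assume z: "z \<in> T"
      have d: "((\<lambda>z. c0 + \<alpha> / (r - z)^1 + \<beta> / (r - z)^2) has_real_derivative
          (0 + of_nat 1 * \<alpha> / (r - z)^(Suc 1) + of_nat 2 * \<beta> / (r - z)^(Suc 2))) (at z)"
        using z unfolding T_def by (intro DERIV_add DERIV_const DERIV_inv_pow) auto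
      have "(deriv ^^ Suc 0) \<psi> z = 0 + of_nat 1 * \<alpha> / (r - z)^(Suc 1) + of_nat 2 * \<beta> / (r - z)^(Suc 2)"
        by (rule deriv_transfer(2)[OF T z _ d]) (use G0 in simp)
      also have "\<dots> = H (Suc 0) z" unfolding H_def by (simp add: numeral_2_eq_2)
      finally show "(deriv ^^ Suc 0) \<psi> z = H (Suc 0) z" .
    qed
  next
    case (Suc k)
    show ?case
    proof
      fix z assume z: "z \<in> T"
      show "(deriv ^^ Suc (Suc k)) \<psi> z = H (Suc (Suc k)) z"
        by (rule deriv_transfer(2)[OF T z Suc.IH Hd]) (use z T_def in simp)
    qed
  qed
  have Hform: "H (Suc j) x = fact (Suc j) * (\<alpha> * (r - x) + \<beta> * (real j + 2)) / (r - x)^(j+3)" if "x < r" for j x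
  proof -
    have u: "r - x \<noteq> 0" using that by simp
    define u where "u = r - x"
    have u0: "u \<noteq> 0" using u unfolding u_def .
    have p: "u^(j+3) = u^(Suc j + 1) * u" by (simp add: numeral_3_eq_3)
    have f: "fact (Suc j + 1) = (real j + 2) * (fact (Suc j) :: real)" by (simp add: algebra_simps)
    have "H (Suc j) x = \<alpha> * fact (Suc j) / u^(Suc j + 1) + \<beta> * fact (Suc j + 1) / u^(j+3)"
      unfolding H_def u_def by (simp add: numeral_3_eq_3 numeral_2_eq_2)
    also have "\<alpha> * fact (Suc j) / u^(Suc j + 1) = \<alpha> * fact (Suc j) * u / u^(j+3)"
      unfolding p using u0 by simp
    finally have "H (Suc j) x = \<alpha> * fact (Suc j) * (r - x) / (r - x)^(j+3) + \<beta> * ((real j + 2) * fact (Suc j)) / (r - x)^(j+3)"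
      unfolding f u_def .
    also have "\<dots> = fact (Suc j) * (\<alpha> * (r - x) + \<beta> * (real j + 2)) / (r - x)^(j+3)"
      by (rule comb_div)
    finally show ?thesis .
  qed
  have am: "abs_monotonic_at (psi_num as) (psi_den as) x" if "-R \<le> x" "x \<le> 0" for x
  proof -
    have xr: "x < r" using that unfolding r_def R_def using s1 by simp
    have np: "\<not> is_pole (psi_num as) (psi_den as) x" using Dpos[OF xr] is_pole_psi by simp
    have "(deriv ^^ k) \<psi> x \<ge> 0" for k
    proof (cases k)
      case 0
      have "\<psi> x = poly (psi_num as) x / poly (psi_den as) x" unfolding \<psi>_def using Dpos[OF xr] by (simp add: ratfun_eq)
      also have "\<dots> > 0" using Dpos[OF xr] sf(3)[of x] by simp
      finally show ?thesis using 0 by simp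
    next
      case (Suc j)
      have "(deriv ^^ k) \<psi> x = H (Suc j) x" using HD[of j] xr unfolding Suc T_def by simp
      also have "\<dots> = fact (Suc j) * (\<alpha> * (r - x) + \<beta> * (real j + 2)) / (r - x)^(j+3)" by (rule Hform[OF xr])
      also have "\<dots> \<ge> 0"
      proof -
        have "\<alpha> * (r - x) \<ge> \<alpha> * (r + R)" using \<alpha>neg that by (intro mult_left_mono_neg) auto
        moreover have "\<beta> * (real j + 2) \<ge> 2 * \<beta>" using \<beta>pos by simp
        ultimately have "\<alpha> * (r - x) + \<beta> * (real j + 2) \<ge> 0" using key by linarith
        then show ?thesis using xr by simp
      qed
      finally show ?thesis .
    qed
    then show ?thesis using np unfolding abs_monotonic_at_def \<psi>_def by blast
  qed
  have nam: "\<not> abs_monotonic_at (psi_num as) (psi_den as) x" if "x < -R" for x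
  proof -
    have xr: "x < r" using that unfolding r_def R_def using s1 by simp
    have "(deriv ^^ Suc 0) \<psi> x = H (Suc 0) x" using HD[of 0] xr unfolding T_def by simp
    also have "\<dots> = fact (Suc 0) * (\<alpha> * (r - x) + \<beta> * (real 0 + 2)) / (r - x)^(0+3)" by (rule Hform[OF xr])
    also have "\<dots> < 0"
    proof -
      have "\<alpha> * (r - x) < \<alpha> * (r + R)" using \<alpha>neg that by (intro mult_strict_left_mono_neg) auto
      then have "\<alpha> * (r - x) + \<beta> * (real 0 + 2) < 0" using key by simp
      then show ?thesis using xr by (simp add: divide_neg_pos)
    qed
    finally show ?thesis unfolding abs_monotonic_at_def \<psi>_def by (metis not_le)
  qed
  have R0: "R \<ge> 0" unfolding R_def using s1 by simp
  have "radius_am (psi_num as) (psi_den as) = ereal R"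
    unfolding radius_am_def
  proof (rule antisym)
    show "Sup ({ereal r' |r'. 0 \<le> r' \<and> (\<forall>x\<in>{- r'..0}. abs_monotonic_at (psi_num as) (psi_den as) x)} \<union> {0}) \<le> ereal R"
    proof (rule Sup_least)
      fix y assume "y \<in> {ereal r' |r'. 0 \<le> r' \<and> (\<forall>x\<in>{- r'..0}. abs_monotonic_at (psi_num as) (psi_den as) x)} \<union> {0}"
      then show "y \<le> ereal R"
      proof
        assume "y \<in> {ereal r' |r'. 0 \<le> r' \<and> (\<forall>x\<in>{- r'..0}. abs_monotonic_at (psi_num as) (psi_den as) x)}"
        then obtain r' where r': "y = ereal r'" "0 \<le> r'" "\<forall>x\<in>{- r'..0}. abs_monotonic_at (psi_num as) (psi_den as) x" by auto
        have "r' \<le> R"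
        proof (rule ccontr)
          assume "\<not> r' \<le> R"
          then have "-r' < -R" by simp
          then have "\<not> abs_monotonic_at (psi_num as) (psi_den as) (-r')" by (rule nam)
          moreover have "-r' \<in> {-r'..0}" using r' by simp
          ultimately show False using r' by blast
        qed
        then show ?thesis using r' by simp
      next
        assume "y \<in> {0}" then show ?thesis using R0 by (simp add: zero_ereal_def)
      qed
    qed
    show "ereal R \<le> Sup ({ereal r' |r'. 0 \<le> r' \<and> (\<forall>x\<in>{- r'..0}. abs_monotonic_at (psi_num as) (psi_den as) x)} \<union> {0})"
      by (rule Sup_upper) (use R0 am in auto)
  qed
  then show ?thesis unfolding as_def R_def s_def .
qed




lemma ev_nz_at0: "eventually (\<lambda>z. z \<noteq> (0::real)) (at 0)"
  unfolding eventually_at by (intro exI[of _ 1]) auto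

lemma ev_small_at0: "eventually (\<lambda>z. \<bar>z\<bar> < (1::real)) (at 0)"
  unfolding eventually_at by (intro exI[of _ 1]) (auto simp: dist_real_def)

lemma coeff_step:
  fixes A K :: real and B :: "real \<Rightarrow> real"
  assumes ev: "eventually (\<lambda>z. \<bar>A + z * B z\<bar> \<le> K * \<bar>z\<bar>^(Suc n)) (at 0)" and cB: "isCont B 0"
  shows "A = 0" "eventually (\<lambda>z. \<bar>B z\<bar> \<le> K * \<bar>z\<bar>^n) (at 0)"
proof -
  have t1: "((\<lambda>z. A + z * B z) \<longlongrightarrow> A + 0 * B 0) (at 0)"
    using cB unfolding isCont_def by (intro tendsto_intros) auto
  have g: "((\<lambda>z. K * \<bar>z\<bar>^(Suc n)) \<longlongrightarrow> K * \<bar>0\<bar>^(Suc n)) (at (0::real))"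
    by (intro tendsto_intros)
  have t2: "((\<lambda>z. A + z * B z) \<longlongrightarrow> 0) (at 0)"
    by (rule Lim_null_comparison[OF _ g[simplified]]) (use ev in simp)
  show A: "A = 0" using tendsto_unique[OF at_neq_bot t1 t2] by simp
  show "eventually (\<lambda>z. \<bar>B z\<bar> \<le> K * \<bar>z\<bar>^n) (at 0)"
    using ev ev_nz_at0
  proof eventually_elim
    case (elim z)
    then have "\<bar>z\<bar> * \<bar>B z\<bar> \<le> \<bar>z\<bar> * (K * \<bar>z\<bar>^n)" using A by (simp add: abs_mult algebra_simps)
    then show ?case using elim(2) by simp
  qed
qed

lemma coeffs_zero:
  fixes e0 e1 e2 e3 e4 e5 K :: real
  assumes "eventually (\<lambda>z. \<bar>e0 + z * (e1 + z * (e2 + z * (e3 + z * (e4 + z * e5))))\<bar> \<le> K * \<bar>z\<bar>^4) (at 0)"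
  shows "e0 = 0" "e1 = 0" "e2 = 0" "e3 = 0"
proof -
  have c: "isCont (\<lambda>z::real. e1 + z * (e2 + z * (e3 + z * (e4 + z * e5)))) 0" by (intro continuous_intros)
  note s1 = coeff_step[of e0 "\<lambda>z. e1 + z * (e2 + z * (e3 + z * (e4 + z * e5)))" K 3, OF _ c]
  have a: "eventually (\<lambda>z. \<bar>e0 + z * (e1 + z * (e2 + z * (e3 + z * (e4 + z * e5))))\<bar> \<le> K * \<bar>z\<bar>^(Suc 3)) (at 0)"
    using assms by (simp add: numeral_eq_Suc)
  show "e0 = 0" using s1(1)[OF a] .
  have b: "eventually (\<lambda>z. \<bar>e1 + z * (e2 + z * (e3 + z * (e4 + z * e5)))\<bar> \<le> K * \<bar>z\<bar>^(Suc 2)) (at 0)"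
    using s1(2)[OF a] by (simp add: numeral_eq_Suc)
  have c2: "isCont (\<lambda>z::real. e2 + z * (e3 + z * (e4 + z * e5))) 0" by (intro continuous_intros)
  note s2 = coeff_step[of e1 "\<lambda>z. e2 + z * (e3 + z * (e4 + z * e5))" K 2, OF b c2]
  show "e1 = 0" using s2(1) .
  have d: "eventually (\<lambda>z. \<bar>e2 + z * (e3 + z * (e4 + z * e5))\<bar> \<le> K * \<bar>z\<bar>^(Suc 1)) (at 0)"
    using s2(2) by (simp add: numeral_eq_Suc)
  have c3: "isCont (\<lambda>z::real. e3 + z * (e4 + z * e5)) 0" by (intro continuous_intros)
  note s3 = coeff_step[of e2 "\<lambda>z. e3 + z * (e4 + z * e5)" K 1, OF d c3]
  show "e2 = 0" using s3(1) .
  have e: "eventually (\<lambda>z. \<bar>e3 + z * (e4 + z * e5)\<bar> \<le> K * \<bar>z\<bar>^(Suc 0)) (at 0)"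
    using s3(2) by simp
  have c4: "isCont (\<lambda>z::real. e4 + z * e5) 0" by (intro continuous_intros)
  show "e3 = 0" using coeff_step(1)[of e3 "\<lambda>z. e4 + z * e5" K 0, OF e c4] .
qed

lemma exp_taylor3:
  fixes z :: real
  assumes "\<bar>z\<bar> \<le> 1"
  shows "\<bar>exp z - (1 + z + z^2/2 + z^3/6)\<bar> \<le> \<bar>z\<bar>^4"
proof -
  obtain t where t: "\<bar>t\<bar> \<le> \<bar>z\<bar>" "exp z = (\<Sum>m<4. z ^ m / fact m) + exp t / fact 4 * z ^ 4"
    using Maclaurin_exp_le[of z 4] by blast
  have s: "(\<Sum>m<4. z ^ m / fact m) = 1 + z + z^2/2 + z^3/6"
    by (simp add: numeral_eq_Suc lessThan_Suc fact_numeral)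
  have "exp t \<le> exp 1" using t assms by simp
  also have "exp (1::real) \<le> 3" using exp_le by simp
  finally have et: "exp t \<le> 3" .
  have "\<bar>exp z - (1 + z + z^2/2 + z^3/6)\<bar> = exp t / 24 * \<bar>z\<bar>^4"
    using t(2) s by (simp add: fact_numeral abs_mult power_abs)
  also have "\<dots> \<le> 1 * \<bar>z\<bar>^4" using et by (intro mult_right_mono) auto
  finally show ?thesis by simp
qed


lemma deg2_eq:
  fixes p :: "real poly"
  assumes "degree p \<le> 2"
  shows "p = [:coeff p 0, coeff p 1, coeff p 2:]"
proof (rule poly_eqI)
  fix n
  show "coeff p n = coeff [:coeff p 0, coeff p 1, coeff p 2:] n"
  proof (cases "n \<le> 2")
    case True
    then have "n = 0 \<or> n = 1 \<or> n = 2" by auto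
    then show ?thesis by (auto simp: numeral_2_eq_2)
  next
    case False
    then obtain m where m: "n = Suc (Suc (Suc m))" by (metis Suc_le_D add_2_eq_Suc le_add2 not_less_eq_eq numeral_2_eq_2 Suc_n_not_le_n)
    have "coeff p n = 0" using assms False by (intro coeff_eq_0) simp
    then show ?thesis unfolding m by simp
  qed
qed

lemma poly_deg2:
  fixes p :: "real poly"
  assumes "degree p \<le> 2"
  shows "poly p z = coeff p 0 + coeff p 1 * z + coeff p 2 * z^2"
  by (subst deg2_eq[OF assms]) (simp add: algebra_simps power2_eq_square)

lemma degree_div_le:
  fixes P g :: "real poly"
  assumes "g dvd P" "g \<noteq> 0"
  shows "degree (P div g) \<le> degree P"
proof (cases "P div g = 0")
  case True then show ?thesis by simp
next
  case False
  have "P = (P div g) * g" using assms by simp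
  then have "degree P = degree (P div g) + degree g" using False assms by (metis degree_mult_eq)
  then show ?thesis by simp
qed

lemma pi_char:
  assumes "(P, Q) \<in> Pi_set 2 2 3"
  shows "\<exists>a. P * psi_den a = psi_num a * Q"
proof -
  have degP: "degree P \<le> 2" and Q: "Q \<noteq> 0" and degQ: "degree Q \<le> 2"
    and bo: "(\<lambda>z. ratfun P Q z - exp z) \<in> O[at 0](\<lambda>z. z ^ (3 + 1))"
    using assms unfolding Pi_set_def by auto
  define r where "r = rnum P Q"
  define s where "s = rden P Q"
  define g where "g = gcd P Q"
  have g: "g \<noteq> 0" using Q unfolding g_def by simp
  have Pr: "P = r * g" and Qs: "Q = s * g" unfolding r_def s_def g_def by (simp_all add: rnum_rden_mult[symmetric])
  have s0: "s \<noteq> 0" using Q Qs by auto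
  have degr: "degree r \<le> 2" using degP degree_div_le[of g P] g unfolding r_def rnum_def g_def by simp
  have degs: "degree s \<le> 2" using degQ degree_div_le[of g Q] g unfolding s_def rden_def g_def by simp
  have cop: "coprime r s" unfolding r_def s_def rnum_def rden_def using Q by (intro div_gcd_coprime) auto
  obtain c where c: "c > 0" "eventually (\<lambda>z. norm (ratfun P Q z - exp z) \<le> c * norm (z ^ (3 + 1))) (at 0)"
    using landau_o.bigE[OF bo] by blast
  define r0 r1 r2 s0' s1 s2 where "r0 = coeff r 0" "r1 = coeff r 1" "r2 = coeff r 2"
    "s0' = coeff s 0" "s1 = coeff s 1" "s2 = coeff s 2"
  have rz: "poly r z = r0 + r1 * z + r2 * z^2" for z unfolding r0_r1_r2_s0'_s1_s2_def using poly_deg2[OF degr] by simp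
  have sz: "poly s z = s0' + s1 * z + s2 * z^2" for z unfolding r0_r1_r2_s0'_s1_s2_def using poly_deg2[OF degs] by simp
  have evs: "eventually (\<lambda>z. poly s z \<noteq> 0) (at 0)"
  proof -
    have "finite {x. poly s x = 0}" by (rule poly_roots_finite[OF s0])
    then have "\<not> 0 islimpt {x. poly s x = 0}" by (rule islimpt_finite)
    then show ?thesis unfolding islimpt_iff_eventually by simp
  qed
  define B where "B = \<bar>s0'\<bar> + \<bar>s1\<bar> + \<bar>s2\<bar>"
  define T where "T z = 1 + z + z^2/2 + z^3/6" for z :: real
  define e0 e1 e2 e3 e4 e5 where "e0 = r0 - s0'" "e1 = r1 - s0' - s1" "e2 = r2 - s0'/2 - s1 - s2"
    "e3 = - (s0'/6 + s1/2 + s2)" "e4 = - (s1/6 + s2/2)" "e5 = - s2/6"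
  have ident: "poly r z - poly s z * T z = e0 + z * (e1 + z * (e2 + z * (e3 + z * (e4 + z * e5))))" for z
    unfolding rz sz T_def e0_e1_e2_e3_e4_e5_def
    by (simp add: algebra_simps power2_eq_square power3_eq_cube add_divide_distrib diff_divide_distrib)
  have Bs: "\<bar>poly s z\<bar> \<le> B" if "\<bar>z\<bar> < 1" for z
  proof -
    have "\<bar>s1 * z\<bar> \<le> \<bar>s1\<bar>" unfolding abs_mult using that by (intro mult_left_le) auto
    moreover have "\<bar>s2 * z^2\<bar> \<le> \<bar>s2\<bar>" unfolding abs_mult using that
      by (intro mult_left_le) (auto simp: power_abs abs_square_le_1)
    ultimately show ?thesis unfolding sz B_def by linarith
  qed
  have ev: "eventually (\<lambda>z. \<bar>e0 + z * (e1 + z * (e2 + z * (e3 + z * (e4 + z * e5))))\<bar> \<le> (B * (c + 1)) * \<bar>z\<bar>^4) (at 0)"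
    using c(2) evs ev_small_at0
  proof eventually_elim
    case (elim z)
    have rf: "ratfun P Q z = poly r z / poly s z" unfolding ratfun_def r_def s_def by simp
    have "poly r z - poly s z * T z = poly s z * ((ratfun P Q z - exp z) + (exp z - T z))"
      unfolding rf using elim(2) by (simp add: algebra_simps)
    then have "\<bar>e0 + z * (e1 + z * (e2 + z * (e3 + z * (e4 + z * e5))))\<bar> = \<bar>poly s z\<bar> * \<bar>(ratfun P Q z - exp z) + (exp z - T z)\<bar>"
      unfolding ident[symmetric] by (simp add: abs_mult)
    also have "\<dots> \<le> B * (c * \<bar>z\<bar>^4 + \<bar>z\<bar>^4)"
    proof (rule mult_mono)
      show "\<bar>poly s z\<bar> \<le> B" using Bs elim(3) by simp
      have "\<bar>ratfun P Q z - exp z\<bar> \<le> c * \<bar>z\<bar>^4" using elim(1) by (simp add: power_abs)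
      moreover have "\<bar>exp z - T z\<bar> \<le> \<bar>z\<bar>^4" unfolding T_def using exp_taylor3[of z] elim(3) by simp
      ultimately show "\<bar>(ratfun P Q z - exp z) + (exp z - T z)\<bar> \<le> c * \<bar>z\<bar>^4 + \<bar>z\<bar>^4" by linarith
      show "0 \<le> B" unfolding B_def by simp
    qed simp
    also have "\<dots> = (B * (c + 1)) * \<bar>z\<bar>^4" by (simp add: algebra_simps)
    finally show ?case .
  qed
  note cz = coeffs_zero[OF ev]
  have s00: "s0' \<noteq> 0"
  proof
    assume h: "s0' = 0"
    then have "r0 = 0" using cz(1) unfolding e0_e1_e2_e3_e4_e5_def by simp
    then have "poly r 0 = 0" "poly s 0 = 0" using h rz[of 0] sz[of 0] by simp_all
    then have "[:-0, 1:] dvd r" "[:-0, 1:] dvd s" by (simp_all only: poly_eq_0_iff_dvd[symmetric])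
    then have "is_unit [:-0, 1::real:]" using cop by (metis coprime_common_divisor)
    then show False by (simp add: is_unit_pCons_iff)
  qed
  define a where "a = s1 / s0'"
  have rr: "r = smult s0' (psi_num a)"
  proof -
    have "r = [:r0, r1, r2:]" unfolding r0_r1_r2_s0'_s1_s2_def by (rule deg2_eq[OF degr])
    also have "\<dots> = smult s0' (psi_num a)"
      using cz s00 unfolding psi_num_def a_def e0_e1_e2_e3_e4_e5_def
      by (simp add: algebra_simps diff_divide_distrib add_divide_distrib)
    finally show ?thesis .
  qed
  have ss: "s = smult s0' (psi_den a)"
  proof -
    have "s = [:s0', s1, s2:]" unfolding r0_r1_r2_s0'_s1_s2_def by (rule deg2_eq[OF degs])
    also have "\<dots> = smult s0' (psi_den a)"
      using cz s00 unfolding psi_den_def a_def e0_e1_e2_e3_e4_e5_def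
      by (simp add: algebra_simps diff_divide_distrib add_divide_distrib)
    finally show ?thesis .
  qed
  have "P * psi_den a = psi_num a * Q" unfolding Pr Qs rr ss by (simp add: ac_simps)
  then show ?thesis by blast
qed


lemma psi_in_Pi: "(psi_num a, psi_den a) \<in> Pi_set 2 2 3"
proof -
  define q where "q = - a/2 - 1/6"
  define T where "T z = 1 + z + z^2/2 + z^3/6" for z :: real
  define M where "M = \<bar>a\<bar> + \<bar>q\<bar>"
  define \<delta> where "\<delta> = 1 / (2 * (M + 1))"
  have M: "M \<ge> 0" unfolding M_def by simp
  have \<delta>: "\<delta> > 0" "\<delta> \<le> 1/2" using M unfolding \<delta>_def by (auto simp: divide_simps)
  have ident: "poly (psi_num a) z - poly (psi_den a) z * T z = (-(z^4)) * (a/6 + q/2 + q*z/6)" for z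
    unfolding poly_psi_num poly_psi_den T_def q_def
    by (simp add: algebra_simps power2_eq_square power3_eq_cube power4_eq_xxxx add_divide_distrib diff_divide_distrib)
  have evd: "eventually (\<lambda>z. \<bar>z\<bar> < \<delta>) (at (0::real))"
    unfolding eventually_at using \<delta> by (intro exI[of _ \<delta>]) (auto simp: dist_real_def)
  have "eventually (\<lambda>z. norm (ratfun (psi_num a) (psi_den a) z - exp z) \<le> (2 * M + 1) * norm (z ^ (3 + 1))) (at 0)"
    using evd
  proof eventually_elim
    case (elim z)
    have z1: "\<bar>z\<bar> \<le> 1" using elim \<delta> by simp
    have "\<bar>a * z + q * z^2\<bar> \<le> M * \<bar>z\<bar>"
    proof -
      have zz0: "\<bar>z\<bar> * \<bar>z\<bar> \<le> \<bar>z\<bar> * 1" by (rule mult_left_mono) (use z1 in auto)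
      then have zz: "\<bar>z\<bar> * \<bar>z\<bar> \<le> \<bar>z\<bar>" by (simp only: mult_1_right)
      have "\<bar>q * z^2\<bar> = \<bar>q\<bar> * (\<bar>z\<bar> * \<bar>z\<bar>)" by (simp add: abs_mult power2_eq_square)
      also have "\<dots> \<le> \<bar>q\<bar> * \<bar>z\<bar>" using zz by (intro mult_left_mono) auto
      finally have "\<bar>q * z^2\<bar> \<le> \<bar>q\<bar> * \<bar>z\<bar>" .
      moreover have "\<bar>a * z + q * z^2\<bar> \<le> \<bar>a * z\<bar> + \<bar>q * z^2\<bar>" by (rule abs_triangle_ineq)
      moreover have "\<bar>a * z\<bar> = \<bar>a\<bar> * \<bar>z\<bar>" by (rule abs_mult)
      ultimately show ?thesis unfolding M_def by (simp add: algebra_simps)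
    qed
    also have "M * \<bar>z\<bar> \<le> M * \<delta>" using elim M by (intro mult_left_mono) auto
    also have "M * \<delta> \<le> 1/2" unfolding \<delta>_def using M by (simp add: divide_simps)
    finally have Dg: "poly (psi_den a) z \<ge> 1/2" unfolding poly_psi_den q_def[symmetric] by linarith
    have rf: "ratfun (psi_num a) (psi_den a) z = poly (psi_num a) z / poly (psi_den a) z"
      using Dg by (intro ratfun_eq) auto
    have "ratfun (psi_num a) (psi_den a) z - exp z =
        (poly (psi_num a) z - poly (psi_den a) z * T z) / poly (psi_den a) z - (exp z - T z)"
      unfolding rf using Dg by (simp add: diff_divide_distrib)
    also have "\<dots> = (-(z^4)) * (a/6 + q/2 + q*z/6) / poly (psi_den a) z - (exp z - T z)" unfolding ident ..
    finally have e: "ratfun (psi_num a) (psi_den a) z - exp z = (-(z^4)) * (a/6 + q/2 + q*z/6) / poly (psi_den a) z - (exp z - T z)" .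
    have b1: "\<bar>a/6 + q/2 + q*z/6\<bar> \<le> M"
    proof -
      have "\<bar>q*z/6\<bar> \<le> \<bar>q\<bar>/6" using z1 by (simp add: abs_mult mult_left_le)
      moreover have "\<bar>a/6 + q/2 + q*z/6\<bar> \<le> \<bar>a/6\<bar> + \<bar>q/2\<bar> + \<bar>q*z/6\<bar>"
        using abs_triangle_ineq[of "a/6 + q/2" "q*z/6"] abs_triangle_ineq[of "a/6" "q/2"] by linarith
      moreover have "\<bar>a/6\<bar> = \<bar>a\<bar>/6" "\<bar>q/2\<bar> = \<bar>q\<bar>/2" by simp_all
      moreover have "\<bar>a\<bar> \<ge> 0" "\<bar>q\<bar> \<ge> 0" by simp_all
      ultimately show ?thesis unfolding M_def by linarith
    qed
    have "\<bar>(-(z^4)) * (a/6 + q/2 + q*z/6) / poly (psi_den a) z\<bar> = \<bar>z\<bar>^4 * \<bar>a/6 + q/2 + q*z/6\<bar> / poly (psi_den a) z"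
      using Dg by (simp add: abs_mult abs_divide power_abs)
    also have "\<dots> \<le> \<bar>z\<bar>^4 * M / (1/2)"
      using Dg b1 by (intro frac_le mult_left_mono) auto
    also have "\<dots> = 2 * M * \<bar>z\<bar>^4" by simp
    finally have t1: "\<bar>(-(z^4)) * (a/6 + q/2 + q*z/6) / poly (psi_den a) z\<bar> \<le> 2 * M * \<bar>z\<bar>^4" .
    have t2: "\<bar>exp z - T z\<bar> \<le> \<bar>z\<bar>^4" unfolding T_def by (rule exp_taylor3[OF z1])
    have "\<bar>ratfun (psi_num a) (psi_den a) z - exp z\<bar> \<le> 2 * M * \<bar>z\<bar>^4 + \<bar>z\<bar>^4"
      unfolding e using t1 t2 by linarith
    then show ?case by (simp add: algebra_simps power_abs)
  qed
  then have "(\<lambda>z. ratfun (psi_num a) (psi_den a) z - exp z) \<in> O[at 0](\<lambda>z. z ^ (3 + 1))"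
    by (rule bigoI)
  moreover have "degree (psi_num a) \<le> 2" "degree (psi_den a) \<le> 2"
    unfolding psi_num_def psi_den_def by (auto simp: degree_pCons_eq_if)
  ultimately show ?thesis unfolding Pi_set_def using psi_den_nz by auto
qed


lemma claim4:
  assumes "a \<noteq> -1 + 1 / sqrt 3"
  shows "radius_am (psi_num a) (psi_den a) < ereal (1 + sqrt 3)"
proof (cases "a < -1")
  case True then show ?thesis by (rule regionA)
next
  case False
  show ?thesis
  proof (cases "a < -1 + 1 / sqrt 3")
    case True then show ?thesis using False by (intro regionB) auto
  next
    case False2: False
    then have gt: "-1 + 1 / sqrt 3 < a" using assms by auto
    show ?thesis
    proof (cases "poly (psi_den a) (-(1 + sqrt 3)) \<ge> 0")
      case True then show ?thesis using gt by (intro regionC) auto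
    next
      case False then show ?thesis by (intro regionD) auto
    qed
  qed
qed

theorem mainTheorem13:
  shows "R_opt 2 2 3 = ereal (1 + sqrt 3)
    \<and> (\<forall>P Q. (P, Q) \<in> Pi_set 2 2 3 \<longrightarrow> (\<exists>a::real. P * psi_den a = psi_num a * Q))
    \<and> radius_am (psi_num (-1 + 1 / sqrt 3)) (psi_den (-1 + 1 / sqrt 3)) = ereal (1 + sqrt 3)
    \<and> (\<forall>a::real. a \<noteq> -1 + 1 / sqrt 3 \<longrightarrow> radius_am (psi_num a) (psi_den a) < ereal (1 + sqrt 3))"
proof -
  have c2: "\<forall>P Q. (P, Q) \<in> Pi_set 2 2 3 \<longrightarrow> (\<exists>a::real. P * psi_den a = psi_num a * Q)"
    using pi_char by blast
  have c3: "radius_am (psi_num (-1 + 1 / sqrt 3)) (psi_den (-1 + 1 / sqrt 3)) = ereal (1 + sqrt 3)"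
    by (rule star_radius)
  have c4: "\<forall>a::real. a \<noteq> -1 + 1 / sqrt 3 \<longrightarrow> radius_am (psi_num a) (psi_den a) < ereal (1 + sqrt 3)"
    using claim4 by blast
  have le: "radius_am P Q \<le> ereal (1 + sqrt 3)" if PQ: "(P, Q) \<in> Pi_set 2 2 3" for P Q
  proof -
    obtain a where a: "P * psi_den a = psi_num a * Q" using pi_char[OF PQ] by blast
    have Q: "Q \<noteq> 0" using PQ unfolding Pi_set_def by auto
    have "radius_am P Q = radius_am (psi_num a) (psi_den a)"
      by (rule same_radius[OF Q psi_den_nz a])
    also have "\<dots> \<le> ereal (1 + sqrt 3)"
    proof (cases "a = -1 + 1 / sqrt 3")
      case True then show ?thesis using c3 by simp
    next
      case False then show ?thesis using c4 by (simp add: order_less_imp_le)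
    qed
    finally show ?thesis .
  qed
  have c1: "R_opt 2 2 3 = ereal (1 + sqrt 3)"
    unfolding R_opt_def
  proof (rule antisym)
    show "Sup ((\<lambda>(P, Q). radius_am P Q) ` Pi_set 2 2 3) \<le> ereal (1 + sqrt 3)"
      by (rule Sup_least) (use le in auto)
    have "(psi_num (-1 + 1 / sqrt 3), psi_den (-1 + 1 / sqrt 3)) \<in> Pi_set 2 2 3" by (rule psi_in_Pi)
    then have "radius_am (psi_num (-1 + 1 / sqrt 3)) (psi_den (-1 + 1 / sqrt 3)) \<in> (\<lambda>(P, Q). radius_am P Q) ` Pi_set 2 2 3"
      by force
    then show "ereal (1 + sqrt 3) \<le> Sup ((\<lambda>(P, Q). radius_am P Q) ` Pi_set 2 2 3)"
      using c3 by (metis Sup_upper)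
  qed
  show ?thesis using c1 c2 c3 c4 by blast
qed

end
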